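(* Let $(X,d)$ be a geodesic metric space and $\epsilon\ge 0$ such that for all $x,y\in X$, $s,t\ge 0$, the set $B(x,s)\cap B(y,t)$ has eccentricity at most $\epsilon$. Then for every $q\ge 0$, all $x,y\in X$, every $q$-path $\mu$ from $x$ to $y$ and every geodesic $\gamma$ from $x$ to $y$, each point of $\mu$ lies within distance $2q+2\epsilon$ of some point of $\gamma$.
   Context: $B(x,r)=\{z\in X: d(x,z)\le r\}$ denotes the closed ball. A set $S\subseteq X$ has eccentricity at most $\delta$ if $S=\emptyset$ or there exist $R\ge 0$ and $c,c'\in X$ with $B(c,R)\subseteq S\subseteq B(c',R+\delta)$. For $q\ge0$, a $q$-path from $x$ to $y$ is a continuous path $\mu$ from $x$ to $y$ such that every point $z$ on $\mu$ satisfies $d(x,z)+d(z,y)\le d(x,y)+q$. *)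

theory Defs
  imports "HOL-Analysis.Analysis"
begin

text \<open>The metric space X is the whole type 'a (class metric_space); closed balls are cball.\<close>

definition eccentricity_le :: "'a::metric_space set \<Rightarrow> real \<Rightarrow> bool" where
  "eccentricity_le S \<delta> \<longleftrightarrow> S = {} \<or>
     (\<exists>R c c'. R \<ge> 0 \<and> cball c R \<subseteq> S \<and> S \<subseteq> cball c' (R + \<delta>))"

definition geodesic :: "(real \<Rightarrow> 'a::metric_space) \<Rightarrow> 'a \<Rightarrow> 'a \<Rightarrow> bool" where
  "geodesic \<gamma> x y \<longleftrightarrow> \<gamma> 0 = x \<and> \<gamma> (dist x y) = y \<and>
     (\<forall>s\<in>{0..dist x y}. \<forall>t\<in>{0..dist x y}. dist (\<gamma> s) (\<gamma> t) = \<bar>s - t\<bar>)"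

definition geodesic_space :: "'a::metric_space itself \<Rightarrow> bool" where
  "geodesic_space _ \<longleftrightarrow> (\<forall>x y::'a. \<exists>\<gamma>. geodesic \<gamma> x y)"

definition q_path :: "real \<Rightarrow> (real \<Rightarrow> 'a::metric_space) \<Rightarrow> 'a \<Rightarrow> 'a \<Rightarrow> bool" where
  "q_path q \<mu> x y \<longleftrightarrow> path \<mu> \<and> pathstart \<mu> = x \<and> pathfinish \<mu> = y \<and>
     (\<forall>z\<in>path_image \<mu>. dist x z + dist z y \<le> dist x y + q)"

end

theory Submission
  imports Defs
begin

lemma key:
  fixes x y c :: "'a::metric_space"
  assumes gs: "geodesic_space TYPE('a)"
    and R: "R \<ge> 0"
    and sub: "cball c R \<subseteq> cball x s \<inter> cball y t"
  shows "min R (dist c x) \<le> s + t - dist x y"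
proof -
  obtain g where g: "geodesic g c x" using gs unfolding geodesic_space_def by blast
  define r where "r = min R (dist c x)"
  have r0: "r \<in> {0..dist c x}" using R by (auto simp: r_def)
  have d0: "0 \<in> {0..dist c x}" and d1: "dist c x \<in> {0..dist c x}" by auto
  have "dist (g 0) (g r) = \<bar>0 - r\<bar>" using g r0 d0 unfolding geodesic_def by blast
  hence cp: "dist c (g r) = r" using g r0 unfolding geodesic_def by auto
  have "dist (g r) (g (dist c x)) = \<bar>r - dist c x\<bar>" using g r0 d1 unfolding geodesic_def by blast
  hence px: "dist (g r) x = dist c x - r" using g r0 unfolding geodesic_def by auto
  have "g r \<in> cball c R" using cp by (simp add: r_def)
  hence "dist y (g r) \<le> t" using sub by auto
  have "c \<in> cball c R" using R by simp
  hence "c \<in> cball x s" using sub by blast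
  hence "dist x c \<le> s" by simp
  have "dist x y \<le> dist x (g r) + dist (g r) y" by (rule dist_triangle)
  thus ?thesis using px \<open>dist y (g r) \<le> t\<close> \<open>dist x c \<le> s\<close>
    by (simp add: r_def[symmetric] dist_commute)
qed

theorem lemma3p3:
  fixes \<epsilon> :: real
  assumes "geodesic_space TYPE('a::metric_space)"
    and "\<epsilon> \<ge> 0"
    and "\<And>(x::'a) y s t. s \<ge> 0 \<Longrightarrow> t \<ge> 0 \<Longrightarrow> eccentricity_le (cball x s \<inter> cball y t) \<epsilon>"
  shows "\<forall>q \<ge> 0. \<forall>(x::'a) y \<mu> \<gamma>. q_path q \<mu> x y \<longrightarrow> geodesic \<gamma> x y \<longrightarrow>
           (\<forall>z\<in>path_image \<mu>. \<exists>w\<in>\<gamma> ` {0..dist x y}. dist z w \<le> 2*q + 2*\<epsilon>)"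
proof (intro allI impI ballI)
  fix q :: real and x y :: 'a and \<mu> \<gamma> z
  assume q: "q \<ge> 0" and qp: "q_path q \<mu> x y" and g: "geodesic \<gamma> x y" and z: "z \<in> path_image \<mu>"
  define a where "a = dist x z"
  define b where "b = dist z y"
  define D where "D = dist x y"
  have ab: "a + b \<le> D + q" using qp z unfolding q_path_def a_def b_def D_def by blast
  have abD: "D \<le> a + b" unfolding a_def b_def D_def by (rule dist_triangle)
  have g0: "\<gamma> 0 = x" and gD: "\<gamma> D = y" using g unfolding geodesic_def D_def by auto
  have giso: "\<And>u v. u \<in> {0..D} \<Longrightarrow> v \<in> {0..D} \<Longrightarrow> dist (\<gamma> u) (\<gamma> v) = \<bar>u - v\<bar>"
    using g unfolding geodesic_def D_def by blast
  define q' where "q' = a + b - D"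
  have q'q: "q' \<le> q" and q'0: "q' \<ge> 0" using ab abD by (auto simp: q'_def)
  show "\<exists>w\<in>\<gamma> ` {0..dist x y}. dist z w \<le> 2*q + 2*\<epsilon>"
  proof (cases "D \<le> 2 * q'")
    case True
    have "min a b \<le> 2*q + 2*\<epsilon>" using True ab q'q assms(2) q by linarith
    moreover have "x \<in> \<gamma> ` {0..dist x y}"
      using g0 by (metis atLeastAtMost_iff image_eqI order_refl zero_le_dist)
    moreover have "y \<in> \<gamma> ` {0..dist x y}"
      using gD unfolding D_def by (metis atLeastAtMost_iff image_eqI order_refl zero_le_dist)
    ultimately show ?thesis unfolding a_def b_def
      by (metis dist_commute min_def)
  next
    case False
    let ?S = "cball x a \<inter> cball y b"
    have zS: "z \<in> ?S" by (auto simp: a_def b_def dist_commute)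
    have "eccentricity_le ?S \<epsilon>" using assms(3) by (simp add: a_def b_def)
    then obtain R c c' where R: "R \<ge> 0" and sub1: "cball c R \<subseteq> ?S" and sub2: "?S \<subseteq> cball c' (R + \<epsilon>)"
      using zS unfolding eccentricity_le_def by blast
    have k1: "min R (dist c x) \<le> q'" using key[OF assms(1) R sub1] by (simp add: q'_def D_def)
    have sub1': "cball c R \<subseteq> cball y b \<inter> cball x a" using sub1 by blast
    have k2: "min R (dist c y) \<le> q'" using key[OF assms(1) R sub1'] by (simp add: q'_def D_def dist_commute)
    have "dist x y \<le> dist x c + dist c y" by (rule dist_triangle)
    hence RR: "R \<le> q'" using k1 k2 False by (auto simp: D_def dist_commute min_def split: if_splits)
    have b0: "0 \<le> b" by (simp add: b_def)
    define r where "r = min a D"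
    have r: "r \<in> {0..D}" using abD by (auto simp: r_def a_def D_def)
    have "dist x (\<gamma> r) = r" using giso[of 0 r] r g0 by auto
    moreover have "dist y (\<gamma> r) = D - r" using giso[of D r] r gD by auto
    moreover have "D - r \<le> b" "r \<le> a" using abD b0 unfolding r_def by (auto simp: min_def)
    ultimately have "\<gamma> r \<in> ?S" by (simp add: dist_commute)
    hence "dist c' (\<gamma> r) \<le> R + \<epsilon>" "dist c' z \<le> R + \<epsilon>" using sub2 zS by auto
    hence "dist z (\<gamma> r) \<le> 2*q + 2*\<epsilon>" using dist_triangle[of z "\<gamma> r" c'] RR q'q
      by (simp add: dist_commute)
    thus ?thesis using r by (auto simp: D_def)
  qed
qed

end
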